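(* Let $r\ge1$ and let $\tau$ be a permutation of $F^r$ fixing $\mathbf 0$. The groups $\mathrm{PAut}(S_\tau)$ and $\mathrm{Aut}(SQS_\tau)$ are isomorphic.
   Context: $F=\mathrm{GF}(2)$, $\mathbf 0$ is the all-zero vector. Index the coordinates of $F^{2^r}$ by the vectors of $F^r$; $e_a$ is the unit vector with a single $1$ at position $a$. The extended Hamming code is $\mathcal H=\{x\in F^{2^r}:\sum_{a:x_a=1}a=\mathbf 0,\ \mathrm{wt}(x)\text{ even}\}$. For $x,y\in F^{2^r}$, $x|y$ is the concatenation and $C\times D=\{x|y:x\in C,y\in D\}$. Define $S_\tau=\bigcup_{a\in F^r}(\mathcal H+e_a+e_{\mathbf 0})\times(\mathcal H+e_{\tau(a)}+e_{\tau(\mathbf 0)})\subseteq F^{2^{r+1}}$. $\mathrm{PAut}(S_\tau)$ is the group of permutations $\pi$ of the coordinate positions with $\pi(S_\tau)=S_\tau$ (where $\pi(y)_i=y_{\pi^{-1}(i)}$). The coordinate positions of $F^{2^{r+1}}$ are denoted $(\{a\},\emptyset)$ (position $a$ in the first half) and $(\emptyset,\{a\})$ (second half). $SQS_\tau$ is the Steiner quadruple system on these positions consisting of $Q_0=\{(\{a,b,c,d\},\emptyset): a,b,c,d \text{ pairwise distinct}, a+b+c+d=\mathbf 0\}$, $Q_1=\{(\emptyset,\{a,b,c,d\}): a,b,c,d \text{ pairwise distinct}, a+b+c+d=\mathbf 0\}$ and $Q_\tau=\{(\{a,c\},\{b,d\}):\tau(a+c)=b+d\neq\mathbf 0\}$,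 where $(X,Y)$ denotes the set of positions $\{(\{x\},\emptyset):x\in X\}\cup\{(\emptyset,\{y\}):y\in Y\}$. $\mathrm{Aut}(SQS_\tau)$ is the group of permutations of positions preserving the set of quadruples. *)

theory Defs
  imports "HOL-Algebra.Bij" "HOL-Algebra.Group"
begin

text \<open>Vectors of F^r, F = GF(2), are modelled as functions from a finite type 'r
  with r = CARD('r) elements into bool (addition = pointwise exclusive or).
  A binary word of length 2^r indexed by F^r is identified with its support,
  a set of vectors.  Positions of F^(2^(r+1)) are Inl a (first half) and Inr a
  (second half).\<close>

type_synonym 'r vec = "'r \<Rightarrow> bool"

definition vzero :: "'r vec" where
  "vzero = (\<lambda>_. False)"

definition vadd :: "'r vec \<Rightarrow> 'r vec \<Rightarrow> 'r vec" where
  "vadd u v = (\<lambda>i. u i \<noteq> v i)"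

definition vsum :: "'r vec set \<Rightarrow> 'r vec" where
  "vsum X = (\<lambda>i. odd (card {a \<in> X. a i}))"

definition ext_hamming :: "('r::finite) vec set set" where
  "ext_hamming = {X. vsum X = vzero \<and> even (card X)}"

text \<open>Adding the unit vector e_a to a word: flip position a.\<close>
definition flip :: "'a set \<Rightarrow> 'a \<Rightarrow> 'a set" where
  "flip X a = (if a \<in> X then X - {a} else insert a X)"

definition cat :: "'a set \<Rightarrow> 'a set \<Rightarrow> ('a + 'a) set" where
  "cat X Y = Inl ` X \<union> Inr ` Y"

definition S_tau :: "(('r::finite) vec \<Rightarrow> 'r vec) \<Rightarrow> ('r vec + 'r vec) set set" where
  "S_tau \<tau> = (\<Union>a. {cat (flip (flip X a) vzero) (flip (flip Y (\<tau> a)) (\<tau> vzero)) | X Y.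
                      X \<in> ext_hamming \<and> Y \<in> ext_hamming})"

definition SQS_tau :: "(('r::finite) vec \<Rightarrow> 'r vec) \<Rightarrow> ('r vec + 'r vec) set set" where
  "SQS_tau \<tau> =
     {Inl ` {a, b, c, d} | a b c d. distinct [a, b, c, d] \<and> vadd (vadd a b) (vadd c d) = vzero}
   \<union> {Inr ` {a, b, c, d} | a b c d. distinct [a, b, c, d] \<and> vadd (vadd a b) (vadd c d) = vzero}
   \<union> {Inl ` {a, c} \<union> Inr ` {b, d} | a b c d. \<tau> (vadd a c) = vadd b d \<and> vadd b d \<noteq> vzero}"

text \<open>For a code
  (family of supports) this is the permutation automorphism group, since the
  support of pi(y) is the image under pi of the support of y; for a block design
  it is the automorphism group.\<close>
definition stab_group :: "'p set set \<Rightarrow> ('p \<Rightarrow> 'p) monoid" where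
  "stab_group B = (BijGroup UNIV)\<lparr>carrier := {\<pi> \<in> Bij UNIV. (\<lambda>Y. \<pi> ` Y) ` B = B}\<rparr>"

definition PAut :: "'p set set \<Rightarrow> ('p \<Rightarrow> 'p) monoid" where
  "PAut C = stab_group C"

definition Aut_design :: "'p set set \<Rightarrow> ('p \<Rightarrow> 'p) monoid" where
  "Aut_design Q = stab_group Q"

end

theory Submission
  imports Defs
begin
definition sdiff :: "'a set \<Rightarrow> 'a set \<Rightarrow> 'a set" where
  "sdiff A B = (A - B) \<union> (B - A)"

definition lpart :: "('a + 'a) set \<Rightarrow> 'a set" where "lpart W = Inl -` W"
definition rpart :: "('a + 'a) set \<Rightarrow> 'a set" where "rpart W = Inr -` W"

lemma lpart_simps[simp]: "lpart {} = {}" "lpart (insert (Inl a) A) = insert a (lpart A)"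
  "lpart (insert (Inr a) A) = lpart A"
  by (auto simp: lpart_def)
lemma rpart_simps[simp]: "rpart {} = {}" "rpart (insert (Inr a) A) = insert a (rpart A)"
  "rpart (insert (Inl a) A) = rpart A"
  by (auto simp: rpart_def)

lemma W_split: "W = Inl ` lpart W \<union> Inr ` rpart W"
proof -
  { fix x have "x \<in> W \<longleftrightarrow> x \<in> Inl ` lpart W \<union> Inr ` rpart W"
    by (cases x) (auto simp: lpart_def rpart_def) }
  thus ?thesis by blast
qed

lemma card_W: "card (W::('a::finite + 'a) set) = card (lpart W) + card (rpart W)"
proof -
  have "card W = card (Inl ` lpart W \<union> Inr ` rpart W)" by (rule arg_cong[where f=card, OF W_split])
  also have "\<dots> = card (Inl ` lpart W :: ('a + 'a) set) + card (Inr ` rpart W :: ('a + 'a) set)"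
    by (rule card_Un_disjoint) auto
  also have "\<dots> = card (lpart W) + card (rpart W)"
    by (simp add: card_image)
  finally show ?thesis .
qed

lemma card_sdiff: "finite A \<Longrightarrow> finite B \<Longrightarrow> card (sdiff A B) + 2 * card (A \<inter> B) = card A + card B"
proof -
  assume f: "finite A" "finite B"
  have e: "sdiff A B = (A \<union> B) - (A \<inter> B)" by (auto simp: sdiff_def)
  have "card ((A \<union> B) - (A \<inter> B)) = card (A \<union> B) - card (A \<inter> B)"
    by (rule card_Diff_subset) (use f in auto)
  moreover have "card (A \<inter> B) \<le> card (A \<union> B)" by (rule card_mono) (use f in auto)
  moreover have "card A + card B = card (A \<union> B) + card (A \<inter> B)" by (rule card_Un_Int[OF f])
  ultimately show ?thesis unfolding e by linarith
qed

lemma even_sdiff: "finite A \<Longrightarrow> finite B \<Longrightarrow> even (card (sdiff A B)) = (even (card A) = even (card B))"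
proof -
  assume "finite A" "finite B"
  hence "card (sdiff A B) + 2 * card (A \<inter> B) = card A + card B" by (rule card_sdiff)
  thus ?thesis by presburger
qed

lemma vsum_sdiff: "finite (A::'r vec set) \<Longrightarrow> finite B \<Longrightarrow> vsum (sdiff A B) = vadd (vsum A) (vsum B)"
proof -
  assume f: "finite A" "finite B"
  show ?thesis unfolding vsum_def vadd_def
  proof
    fix i
    have "{a \<in> sdiff A B. a i} = sdiff {a\<in>A. a i} {a\<in>B. a i}" by (auto simp: sdiff_def)
    thus "odd (card {a \<in> sdiff A B. a i}) = (odd (card {a \<in> A. a i}) \<noteq> odd (card {a \<in> B. a i}))"
      using even_sdiff[of "{a\<in>A. a i}" "{a\<in>B. a i}"] f by auto
  qed
qed

lemma vsum_empty[simp]: "vsum {} = vzero" by (simp add: vsum_def vzero_def)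

lemma vsum_insert: "finite (A::'r vec set) \<Longrightarrow> x \<notin> A \<Longrightarrow> vsum (insert x A) = vadd x (vsum A)"
  unfolding vsum_def vadd_def
proof
  fix i assume f: "finite A" "x \<notin> A"
  show "odd (card {a \<in> insert x A. a i}) = (x i \<noteq> odd (card {a \<in> A. a i}))"
  proof (cases "x i")
    case True
    hence "{a \<in> insert x A. a i} = insert x {a \<in> A. a i}" by auto
    thus ?thesis using f True by simp
  next
    case False
    hence "{a \<in> insert x A. a i} = {a \<in> A. a i}" by auto
    thus ?thesis using False by simp
  qed
qed

lemma vadd_comm: "vadd a b = vadd b a" by (auto simp: vadd_def)
lemma vadd_assoc: "vadd (vadd a b) c = vadd a (vadd b c)" by (auto simp: vadd_def)
lemma vadd_left_comm: "vadd a (vadd b c) = vadd b (vadd a c)" by (auto simp: vadd_def)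
lemma vadd_self[simp]: "vadd a a = vzero" by (auto simp: vadd_def vzero_def)
lemma vadd_self2[simp]: "vadd a (vadd a b) = b" by (auto simp: vadd_def)
lemma vadd_zero[simp]: "vadd a vzero = a" "vadd vzero a = a" by (auto simp: vadd_def vzero_def)
lemma vadd_eq_zero: "(vadd a b = vzero) = (a = b)" by (auto simp: vadd_def vzero_def fun_eq_iff)
lemma vadd_cancel[simp]: "(vadd a b = vadd a c) = (b = c)" by (auto simp: vadd_def fun_eq_iff)
lemma vadd_cancel2[simp]: "(vadd a b = a) = (b = vzero)" "(a = vadd a b) = (b = vzero)"
  by (auto simp: vadd_def vzero_def fun_eq_iff)

lemma flip_sdiff: "flip X a = sdiff X {a}" by (auto simp: flip_def sdiff_def)

lemma flip_flip: "flip (flip X a) a = X" by (auto simp: flip_def)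

lemma vsum_flip: "vsum (flip (X::('r::finite) vec set) a) = vadd (vsum X) a"
  by (simp add: flip_sdiff vsum_sdiff vsum_insert)

lemma even_flip: "even (card (flip (X::('r::finite) vec set) a)) = odd (card X)"
  by (simp add: flip_sdiff even_sdiff)

lemma lpart_cat[simp]: "lpart (cat X Y) = X" by (auto simp: lpart_def cat_def)
lemma rpart_cat[simp]: "rpart (cat X Y) = Y" by (auto simp: rpart_def cat_def)

lemma S_char:
  fixes \<tau> :: "('r::finite) vec \<Rightarrow> 'r vec"
  assumes "\<tau> vzero = vzero"
  shows "W \<in> S_tau \<tau> \<longleftrightarrow> even (card (lpart W)) \<and> even (card (rpart W)) \<and> vsum (rpart W) = \<tau> (vsum (lpart W))"
proof
  assume "W \<in> S_tau \<tau>"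
  then obtain a X Y where W: "W = cat (flip (flip X a) vzero) (flip (flip Y (\<tau> a)) (\<tau> vzero))"
    and XY: "X \<in> ext_hamming" "Y \<in> ext_hamming" unfolding S_tau_def by auto
  show "even (card (lpart W)) \<and> even (card (rpart W)) \<and> vsum (rpart W) = \<tau> (vsum (lpart W))"
    using XY assms unfolding W by (simp add: vsum_flip even_flip ext_hamming_def)
next
  assume H: "even (card (lpart W)) \<and> even (card (rpart W)) \<and> vsum (rpart W) = \<tau> (vsum (lpart W))"
  define a where "a = vsum (lpart W)"
  define X where "X = flip (flip (lpart W) vzero) a"
  define Y where "Y = flip (flip (rpart W) vzero) (\<tau> a)"
  have "X \<in> ext_hamming" using H unfolding X_def ext_hamming_def a_def
    by (simp add: vsum_flip even_flip)
  moreover have "Y \<in> ext_hamming" using H unfolding Y_def ext_hamming_def a_def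
    by (simp add: vsum_flip even_flip)
  moreover have "W = cat (flip (flip X a) vzero) (flip (flip Y (\<tau> a)) (\<tau> vzero))"
    unfolding X_def Y_def assms flip_flip cat_def by (rule W_split)
  ultimately have Wm: "W \<in> {cat (flip (flip X a) vzero) (flip (flip Y (\<tau> a)) (\<tau> vzero)) | X Y.
                      X \<in> ext_hamming \<and> Y \<in> ext_hamming}" by blast
  show "W \<in> S_tau \<tau>" unfolding S_tau_def
    apply (rule UN_I[where a=a, OF UNIV_I]) by (rule Wm)
qed

lemma lpart_Un[simp]: "lpart (A \<union> B) = lpart A \<union> lpart B" by (auto simp: lpart_def)
lemma rpart_Un[simp]: "rpart (A \<union> B) = rpart A \<union> rpart B" by (auto simp: rpart_def)
lemma lpart_img[simp]: "lpart (Inl ` A) = A" "lpart (Inr ` A) = {}" by (auto simp: lpart_def)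
lemma rpart_img[simp]: "rpart (Inr ` A) = A" "rpart (Inl ` A) = {}" by (auto simp: rpart_def)
lemma lpart_sdiff: "lpart (sdiff A B) = sdiff (lpart A) (lpart B)" by (auto simp: lpart_def sdiff_def)
lemma rpart_sdiff: "rpart (sdiff A B) = sdiff (rpart A) (rpart B)" by (auto simp: rpart_def sdiff_def)

lemma card4_distinct: "card {a,b,c,d} = 4 \<longleftrightarrow> distinct [a,b,c,d]"
  by (auto simp: card_insert_if)

lemma card4_obtain:
  assumes "card A = 4"
  obtains a b c d where "A = {a,b,c,d}" "distinct [a,b,c,d]"
proof -
  from assms have "card A = Suc 3" by simp
  then obtain a B where A: "A = insert a B" "a \<notin> B" "card B = 3" using card_eq_SucD by blast
  then obtain b c d where "B = {b,c,d}" "b \<noteq> c" "c \<noteq> d" "b \<noteq> d" by (auto simp: card_3_iff)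
  thus ?thesis using that A by auto
qed

lemma vsum2: "a \<noteq> b \<Longrightarrow> vsum {a,b} = vadd a b" by (simp add: vsum_insert)
lemma vsum4: "distinct [a,b,c,d] \<Longrightarrow> vsum {a,b,c,d} = vadd a (vadd b (vadd c d))" by (simp add: vsum_insert)

lemma vadd_eq_iff: "vadd a b = c \<longleftrightarrow> a = vadd c b" by (auto simp: vadd_def fun_eq_iff)

locale tctx =
  fixes \<tau> :: "('r::finite) vec \<Rightarrow> 'r vec"
  assumes tb: "bij \<tau>" and t0: "\<tau> vzero = vzero"

context tctx
begin

lemma tinj: "\<tau> x = \<tau> y \<longleftrightarrow> x = y" using tb by (auto simp: bij_def inj_eq)
lemma tz: "\<tau> x = vzero \<longleftrightarrow> x = vzero" using tinj[of x vzero] t0 by simp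

lemma Sc: "W \<in> S_tau \<tau> \<longleftrightarrow> even (card (lpart W)) \<and> even (card (rpart W)) \<and> vsum (rpart W) = \<tau> (vsum (lpart W))"
  by (rule S_char[where \<tau>=\<tau>, OF t0])

lemma SQS_char: "SQS_tau \<tau> = {B \<in> S_tau \<tau>. card B = 4}"
proof (rule Set.set_eqI, rule iffI)
  fix B assume "B \<in> SQS_tau \<tau>"
  then consider (q0) a b c d where "B = Inl ` {a,b,c,d}" "distinct [a,b,c,d]" "vadd (vadd a b) (vadd c d) = vzero"
    | (q1) a b c d where "B = Inr ` {a,b,c,d}" "distinct [a,b,c,d]" "vadd (vadd a b) (vadd c d) = vzero"
    | (qt) a b c d where "B = Inl ` {a, c} \<union> Inr ` {b, d}" "\<tau> (vadd a c) = vadd b d" "vadd b d \<noteq> vzero"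
    unfolding SQS_tau_def by (elim UnE CollectE exE conjE) (rule that(1), assumption+; fail | rule that(2), assumption+; fail | rule that(3), assumption+)+
  thus "B \<in> {B \<in> S_tau \<tau>. card B = 4}"
  proof cases
    case q0
    thus ?thesis by (simp add: Sc card_W vsum4 vadd_assoc t0)
  next
    case q1
    thus ?thesis by (simp add: Sc card_W vsum4 vadd_assoc t0)
  next
    case qt
    have bd: "b \<noteq> d" using qt(3) vadd_eq_zero by auto
    have ac: "a \<noteq> c" using qt(2,3) t0 by auto
    show ?thesis using qt bd ac by (simp add: Sc card_W vsum2)
  qed
next
  fix B assume "B \<in> {B \<in> S_tau \<tau>. card B = 4}"
  hence BS: "even (card (lpart B))" "even (card (rpart B))" "vsum (rpart B) = \<tau> (vsum (lpart B))"
    and c4: "card (lpart B) + card (rpart B) = 4" by (auto simp: Sc card_W)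
  have Bs: "B = Inl ` lpart B \<union> Inr ` rpart B" by (rule W_split)
  have "card (lpart B) = 4 \<and> card (rpart B) = 0 \<or> card (lpart B) = 2 \<and> card (rpart B) = 2
     \<or> card (lpart B) = 0 \<and> card (rpart B) = 4" using BS(1,2) c4 by presburger
  thus "B \<in> SQS_tau \<tau>"
  proof (elim disjE conjE)
    assume l: "card (lpart B) = 4" and r: "card (rpart B) = 0"
    then obtain a b c d where L: "lpart B = {a,b,c,d}" "distinct [a,b,c,d]" by (auto elim: card4_obtain)
    have R: "rpart B = {}" using r by simp
    have "\<tau> (vsum (lpart B)) = vzero" using BS(3) R by simp
    hence "vsum (lpart B) = vzero" by (simp add: tz)
    hence "vadd (vadd a b) (vadd c d) = vzero" using L by (simp add: vsum4 vadd_assoc del: distinct.simps)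
    moreover have "B = Inl ` {a,b,c,d}" using Bs L R by simp
    ultimately have "\<exists>a b c d. B = Inl ` {a,b,c,d} \<and> distinct [a,b,c,d] \<and> vadd (vadd a b) (vadd c d) = vzero"
      using L by (intro exI[of _ a] exI[of _ b] exI[of _ c] exI[of _ d] conjI)
    thus ?thesis unfolding SQS_tau_def by (intro UnI1 CollectI)
  next
    assume l: "card (lpart B) = 0" and r: "card (rpart B) = 4"
    then obtain a b c d where R: "rpart B = {a,b,c,d}" "distinct [a,b,c,d]" by (auto elim: card4_obtain)
    have L: "lpart B = {}" using l by simp
    have "vsum (rpart B) = vzero" using BS(3) L t0 by simp
    hence "vadd (vadd a b) (vadd c d) = vzero" using R by (simp add: vsum4 vadd_assoc del: distinct.simps)
    moreover have "B = Inr ` {a,b,c,d}" using Bs L R by simp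
    ultimately have "\<exists>a b c d. B = Inr ` {a,b,c,d} \<and> distinct [a,b,c,d] \<and> vadd (vadd a b) (vadd c d) = vzero"
      using R by (intro exI[of _ a] exI[of _ b] exI[of _ c] exI[of _ d] conjI)
    thus ?thesis unfolding SQS_tau_def by (intro UnI1 UnI2 CollectI)
  next
    assume l: "card (lpart B) = 2" and r: "card (rpart B) = 2"
    then obtain a c b d where L: "lpart B = {a,c}" "a \<noteq> c" and R: "rpart B = {b,d}" "b \<noteq> d"
      by (auto simp: card_2_iff)
    have "\<tau> (vadd a c) = vadd b d" using BS(3) L R by (simp add: vsum2)
    moreover have "vadd b d \<noteq> vzero" using R(2) by (simp add: vadd_eq_zero)
    moreover have "B = Inl ` {a,c} \<union> Inr ` {b,d}" using Bs L R by simp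
    ultimately have "\<exists>a b c d. B = Inl ` {a, c} \<union> Inr ` {b, d} \<and> \<tau> (vadd a c) = vadd b d \<and> vadd b d \<noteq> vzero"
      by (intro exI[of _ a] exI[of _ b] exI[of _ c] exI[of _ d] conjI)
    thus ?thesis unfolding SQS_tau_def by (intro UnI2 CollectI)
  qed
qed

end

definition good :: "'p set set \<Rightarrow> 'p \<Rightarrow> 'p \<Rightarrow> bool" where
  "good D p q \<longleftrightarrow> (\<forall>s t s' t'. {p,q,s,t} \<in> D \<longrightarrow> {p,q,s',t'} \<in> D \<longrightarrow> distinct [s,t,s',t'] \<longrightarrow> {s,t,s',t'} \<in> D)"

definition sd :: "'a + 'a \<Rightarrow> bool" where "sd x = (case x of Inl _ \<Rightarrow> True | Inr _ \<Rightarrow> False)"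

lemma sd_simps[simp]: "sd (Inl a) = True" "sd (Inr a) = False" by (auto simp: sd_def)

lemma img_mem:
  assumes "bij \<pi>" "(\<lambda>Y. \<pi> ` Y) ` D = D"
  shows "\<pi> ` A \<in> D \<longleftrightarrow> A \<in> D"
proof -
  have i: "inj (\<lambda>Y. \<pi> ` Y)" by (rule injI) (use assms(1) in \<open>simp add: bij_is_inj inj_image_eq_iff\<close>)
  have "\<pi> ` A \<in> D \<longleftrightarrow> \<pi> ` A \<in> (\<lambda>Y. \<pi> ` Y) ` D" unfolding assms(2) ..
  also have "\<dots> \<longleftrightarrow> A \<in> D" using inj_image_mem_iff[OF i] by simp
  finally show ?thesis .
qed

lemma good_perm:
  assumes "bij \<pi>" "(\<lambda>Y. \<pi> ` Y) ` D = D" "good D p q"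
  shows "good D (\<pi> p) (\<pi> q)"
  unfolding good_def
proof (intro allI impI)
  fix s t s' t'
  assume h1: "{\<pi> p, \<pi> q, s, t} \<in> D" and h2: "{\<pi> p, \<pi> q, s', t'} \<in> D" and h3: "distinct [s, t, s', t']"
  let ?g = "inv_into UNIV \<pi>"
  have fi: "\<And>x. \<pi> (?g x) = x" using assms(1) by (simp add: bij_is_surj surj_f_inv_f)
  have gi: "inj ?g" using assms(1) by (simp add: bij_imp_bij_inv bij_is_inj)
  have e1: "{\<pi> p, \<pi> q, s, t} = \<pi> ` {p, q, ?g s, ?g t}" by (simp add: fi)
  have e2: "{\<pi> p, \<pi> q, s', t'} = \<pi> ` {p, q, ?g s', ?g t'}" by (simp add: fi)
  have e3: "{s, t, s', t'} = \<pi> ` {?g s, ?g t, ?g s', ?g t'}" by (simp add: fi)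
  have "{p, q, ?g s, ?g t} \<in> D" using h1 unfolding e1 img_mem[OF assms(1,2)] .
  moreover have "{p, q, ?g s', ?g t'} \<in> D" using h2 unfolding e2 img_mem[OF assms(1,2)] .
  moreover have "distinct [?g s, ?g t, ?g s', ?g t']" using h3 gi by (simp add: inj_eq)
  ultimately have "{?g s, ?g t, ?g s', ?g t'} \<in> D" by (rule assms(3)[unfolded good_def, rule_format])
  thus "{s, t, s', t'} \<in> D" unfolding e3 img_mem[OF assms(1,2)] .
qed

lemma image_sdiff: "inj f \<Longrightarrow> f ` (sdiff A B) = sdiff (f ` A) (f ` B)"
  by (auto simp: sdiff_def image_set_diff image_Un)

lemma sdiff_sdiff: "sdiff (sdiff A B) B = A" by (auto simp: sdiff_def)

lemma vsum_single: "vsum {a} = a" by (simp add: vsum_insert)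

context tctx
begin

lemma tinj': "\<tau> x = \<tau> y \<longleftrightarrow> x = y" using tb by (auto simp: bij_def inj_eq)
lemma tz': "\<tau> x = vzero \<longleftrightarrow> x = vzero" using tinj'[of x vzero] t0 by simp
lemma tz2: "vzero = \<tau> x \<longleftrightarrow> x = vzero" by (metis tz')

lemma Sc': "W \<in> S_tau \<tau> \<longleftrightarrow> even (card (lpart W)) \<and> even (card (rpart W)) \<and> vsum (rpart W) = \<tau> (vsum (lpart W))"
  by (rule S_char[where \<tau>=\<tau>, OF t0])

lemma D_char: "B \<in> SQS_tau \<tau> \<longleftrightarrow> B \<in> S_tau \<tau> \<and> card B = 4"
  unfolding SQS_char by (rule mem_Collect_eq)

lemma S_sdiff:
  assumes "V \<in> S_tau \<tau>" "B \<in> S_tau \<tau>"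
    "\<tau> (vadd (vsum (lpart V)) (vsum (lpart B))) = vadd (\<tau> (vsum (lpart V))) (\<tau> (vsum (lpart B)))"
  shows "sdiff V B \<in> S_tau \<tau>"
  using assms by (simp add: Sc' lpart_sdiff rpart_sdiff even_sdiff vsum_sdiff)

lemma half_pres:
  assumes "B \<in> S_tau \<tau>" "B \<subseteq> range Inl \<or> B \<subseteq> range Inr" "V \<in> S_tau \<tau>"
  shows "sdiff V B \<in> S_tau \<tau>"
proof -
  have "vsum (lpart B) = vzero"
  proof (cases "B \<subseteq> range Inl")
    case True
    hence "rpart B = {}" by (auto simp: rpart_def)
    thus ?thesis using assms(1) by (simp add: Sc' tz2)
  next
    case False
    hence "lpart B = {}" using assms(2) by (auto simp: lpart_def)
    thus ?thesis by simp
  qed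
  thus ?thesis using assms by (intro S_sdiff) (simp_all add: t0)
qed

end

lemma vadd_l1: "vadd a (vadd b c) = a \<longleftrightarrow> b = c" by (simp add: vadd_eq_zero)
lemma vadd_l2: "vadd a (vadd b c) = b \<longleftrightarrow> a = c" by (simp add: vadd_left_comm[of a b c] vadd_eq_zero)
lemma vadd_l3: "vadd a (vadd b c) = c \<longleftrightarrow> a = b"
  by (simp add: vadd_comm[of b c] vadd_left_comm[of a c b] vadd_eq_zero)
lemma vadd_l4: "vadd (vadd a b) (vadd c (vadd a (vadd b c))) = vzero"
  unfolding vadd_def vzero_def
proof
  fix x show "(a x \<noteq> b x) \<noteq> (c x \<noteq> (a x \<noteq> (b x \<noteq> c x))) = False"
    by (cases "a x"; cases "b x"; cases "c x") simp_all
qed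
lemma vadd_l5: "vadd (vadd a v) (vadd a w) = vadd v w"
  unfolding vadd_def
proof
  fix x show "(a x \<noteq> v x) \<noteq> (a x \<noteq> w x) = (v x \<noteq> w x)"
    by (cases "a x"; cases "v x"; cases "w x") simp_all
qed

lemma good_sym: "good D p q = good D q p" unfolding good_def insert_commute[of p q] ..

lemma sd_iff1: "sd x \<longleftrightarrow> x \<in> range Inl" by (cases x) auto
lemma sd_iff2: "\<not> sd x \<longleftrightarrow> x \<in> range Inr" by (cases x) auto

lemma quad:
  fixes X :: "('r::finite) vec set"
  assumes "3 \<le> card X"
  obtains a b c d where "distinct [a,b,c,d]" "a \<in> X" "b \<in> X" "c \<in> X" "vadd (vadd a b) (vadd c d) = vzero"
proof -
  obtain T where T: "T \<subseteq> X" "card T = 3" using obtain_subset_with_card_n[OF assms] by metis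
  then obtain a b c where abc: "T = {a,b,c}" "a \<noteq> b" "b \<noteq> c" "a \<noteq> c" by (auto simp: card_3_iff)
  let ?d = "vadd a (vadd b c)"
  have "?d \<noteq> a" "?d \<noteq> b" "?d \<noteq> c" using abc vadd_l1[of a b c] vadd_l2[of a b c] vadd_l3[of a b c] by simp_all
  hence "distinct [a,b,c,?d]" using abc by auto
  moreover have "vadd (vadd a b) (vadd c ?d) = vzero" by (rule vadd_l4)
  moreover have "a \<in> X" "b \<in> X" "c \<in> X" using T abc by auto
  ultimately show ?thesis by (intro that[of a b c ?d])
qed

context tctx
begin

lemma addtri: "x1 = vzero \<or> x2 = vzero \<or> x1 = x2 \<Longrightarrow> \<tau> (vadd x1 x2) = vadd (\<tau> x1) (\<tau> x2)"
  using t0 by (elim disjE) simp_all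

lemma blkL:
  assumes "{Inl a, Inl c, s, t} \<in> S_tau \<tau>" "card {Inl a, Inl c, s, t} = 4"
  shows "vsum (lpart {Inl a, Inl c, s, t}) = vzero \<or> vsum (lpart {Inl a, Inl c, s, t}) = vadd a c"
proof -
  have d: "distinct [Inl a, Inl c, s, t]" using assms(2) card4_distinct by metis
  show ?thesis
  proof (cases s; cases t)
    fix s0 t0 assume st: "s = Inl s0" "t = Inl t0"
    have "vzero = \<tau> (vsum (lpart {Inl a, Inl c, s, t}))" using assms(1) unfolding Sc' st by simp
    thus ?thesis by (simp add: tz2)
  next
    fix s0 t0 assume st: "s = Inl s0" "t = Inr t0"
    have "card (lpart {Inl a, Inl c, s, t}) = 3" using d unfolding st by simp
    thus ?thesis using assms(1) unfolding Sc' by simp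
  next
    fix s0 t0 assume st: "s = Inr s0" "t = Inl t0"
    have "card (lpart {Inl a, Inl c, s, t}) = 3" using d unfolding st by simp
    thus ?thesis using assms(1) unfolding Sc' by simp
  next
    fix s0 t0 assume st: "s = Inr s0" "t = Inr t0"
    thus ?thesis using d by (simp add: vsum2)
  qed
qed

lemma blkR:
  assumes "{Inr a, Inr c, s, t} \<in> S_tau \<tau>" "card {Inr a, Inr c, s, t} = 4"
  shows "vsum (lpart {Inr a, Inr c, s, t}) = vzero \<or> \<tau> (vsum (lpart {Inr a, Inr c, s, t})) = vadd a c"
proof -
  have d: "distinct [Inr a, Inr c, s, t]" using assms(2) card4_distinct by metis
  show ?thesis
  proof (cases s; cases t)
    fix s0 t0 assume st: "s = Inl s0" "t = Inl t0"
    have "vsum (rpart {Inr a, Inr c, s, t}) = \<tau> (vsum (lpart {Inr a, Inr c, s, t}))" using assms(1) unfolding Sc' by simp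
    moreover have "vsum (rpart {Inr a, Inr c, s, t}) = vadd a c" using d unfolding st by (simp add: vsum2)
    ultimately show ?thesis by simp
  next
    fix s0 t0 assume st: "s = Inl s0" "t = Inr t0"
    have "card (rpart {Inr a, Inr c, s, t}) = 3" using d unfolding st by simp
    thus ?thesis using assms(1) unfolding Sc' by simp
  next
    fix s0 t0 assume st: "s = Inr s0" "t = Inl t0"
    have "card (rpart {Inr a, Inr c, s, t}) = 3" using d unfolding st by simp
    thus ?thesis using assms(1) unfolding Sc' by simp
  next
    fix s0 t0 assume st: "s = Inr s0" "t = Inr t0"
    thus ?thesis by simp
  qed
qed

lemma same_good:
  assumes "sd p = sd q"
  shows "good (SQS_tau \<tau>) p q"
  unfolding good_def
proof (intro allI impI)
  fix s t s' t'
  assume h1: "{p, q, s, t} \<in> SQS_tau \<tau>" and h2: "{p, q, s', t'} \<in> SQS_tau \<tau>" and h3: "distinct [s, t, s', t']"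
  have B1: "{p, q, s, t} \<in> S_tau \<tau>" "card {p, q, s, t} = 4" using h1 D_char by blast+
  have B2: "{p, q, s', t'} \<in> S_tau \<tau>" "card {p, q, s', t'} = 4" using h2 D_char by blast+
  have d1: "distinct [p,q,s,t]" using B1(2) card4_distinct by metis
  have d2: "distinct [p,q,s',t']" using B2(2) card4_distinct by metis
  have e: "{s, t, s', t'} = sdiff {p, q, s, t} {p, q, s', t'}"
    using d1 d2 h3 by (auto simp: sdiff_def)
  let ?x1 = "vsum (lpart {p, q, s, t})" and ?x2 = "vsum (lpart {p, q, s', t'})"
  have tri: "?x1 = vzero \<or> ?x2 = vzero \<or> ?x1 = ?x2"
  proof (cases p)
    case (Inl a)
    then obtain c where qc: "q = Inr c \<Longrightarrow> False" "q = Inl c" using assms by (cases q) auto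
    have "?x1 = vzero \<or> ?x1 = vadd a c" using blkL[of a c s t] B1 unfolding Inl qc(2) by simp
    moreover have "?x2 = vzero \<or> ?x2 = vadd a c" using blkL[of a c s' t'] B2 unfolding Inl qc(2) by simp
    ultimately show ?thesis by metis
  next
    case (Inr a)
    then obtain c where qc: "q = Inr c" using assms by (cases q) auto
    have "?x1 = vzero \<or> \<tau> ?x1 = vadd a c" using blkR[of a c s t] B1 unfolding Inr qc by simp
    moreover have "?x2 = vzero \<or> \<tau> ?x2 = vadd a c" using blkR[of a c s' t'] B2 unfolding Inr qc by simp
    ultimately show ?thesis using tinj' by metis
  qed
  have "sdiff {p, q, s, t} {p, q, s', t'} \<in> S_tau \<tau>"
    by (rule S_sdiff[OF B1(1) B2(1) addtri[OF tri]])
  moreover have "card {s, t, s', t'} = 4" using h3 card4_distinct by metis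
  ultimately show "{s, t, s', t'} \<in> SQS_tau \<tau>" using e D_char by simp
qed

end

context tctx
begin

lemma cross_bad:
  assumes na: "\<tau> (vadd v w) \<noteq> vadd (\<tau> v) (\<tau> w)"
  shows "\<not> good (SQS_tau \<tau>) (Inl a) (Inr b)"
proof
  assume g: "good (SQS_tau \<tau>) (Inl a) (Inr b)"
  have v0: "v \<noteq> vzero" using na t0 by auto
  have w0: "w \<noteq> vzero" using na t0 by auto
  have vw: "v \<noteq> w" using na t0 by auto
  have tv0: "\<tau> v \<noteq> vzero" using v0 tz' by metis
  have tw0: "\<tau> w \<noteq> vzero" using w0 tz' by metis
  have tvw: "\<tau> v \<noteq> \<tau> w" using vw tinj' by metis
  let ?s = "Inl (vadd a v) :: 'r vec + 'r vec" and ?t = "Inr (vadd b (\<tau> v)) :: 'r vec + 'r vec"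
  let ?s' = "Inl (vadd a w) :: 'r vec + 'r vec" and ?t' = "Inr (vadd b (\<tau> w)) :: 'r vec + 'r vec"
  have blk: "{Inl a, Inr b, Inl (vadd a u), Inr (vadd b (\<tau> u))} \<in> SQS_tau \<tau>"
    if u0: "u \<noteq> vzero" "\<tau> u \<noteq> vzero" for u
  proof -
    have ne1: "a \<noteq> vadd a u" using u0 by simp
    have ne2: "b \<noteq> vadd b (\<tau> u)" using u0 by simp
    have c: "card {Inl a, Inr b, Inl (vadd a u), Inr (vadd b (\<tau> u))} = 4"
      unfolding card4_distinct using ne1 ne2 by simp
    have l: "lpart {Inl a, Inr b, Inl (vadd a u), Inr (vadd b (\<tau> u))} = {a, vadd a u}" by simp
    have r: "rpart {Inl a, Inr b, Inl (vadd a u), Inr (vadd b (\<tau> u))} = {b, vadd b (\<tau> u)}" by simp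
    have "{Inl a, Inr b, Inl (vadd a u), Inr (vadd b (\<tau> u))} \<in> S_tau \<tau>"
      unfolding Sc' l r using ne1 ne2 by (simp add: vsum2)
    thus ?thesis using c D_char by simp
  qed
  have "{?s, ?t, ?s', ?t'} \<in> SQS_tau \<tau>"
  proof (rule g[unfolded good_def, rule_format])
    show "{Inl a, Inr b, ?s, ?t} \<in> SQS_tau \<tau>" using blk v0 tv0 by simp
    show "{Inl a, Inr b, ?s', ?t'} \<in> SQS_tau \<tau>" using blk w0 tw0 by simp
    show "distinct [?s, ?t, ?s', ?t']" using vw tvw by simp
  qed
  hence "{?s, ?t, ?s', ?t'} \<in> S_tau \<tau>" using D_char by simp
  moreover have "lpart {?s, ?t, ?s', ?t'} = {vadd a v, vadd a w}" by simp
  moreover have "rpart {?s, ?t, ?s', ?t'} = {vadd b (\<tau> v), vadd b (\<tau> w)}" by simp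
  ultimately have "vadd (vadd b (\<tau> v)) (vadd b (\<tau> w)) = \<tau> (vadd (vadd a v) (vadd a w))"
    unfolding Sc' using vw tvw by (simp add: vsum2)
  thus False using na by (simp add: vadd_l5)
qed

lemma side_pres:
  assumes na: "\<not> (\<forall>x y. \<tau> (vadd x y) = vadd (\<tau> x) (\<tau> y))"
    and pb: "bij \<pi>" and pD: "(\<lambda>Y. \<pi> ` Y) ` SQS_tau \<tau> = SQS_tau \<tau>" and s: "sd p = sd q"
  shows "sd (\<pi> p) = sd (\<pi> q)"
proof (rule ccontr)
  assume ne: "sd (\<pi> p) \<noteq> sd (\<pi> q)"
  obtain v w where vw: "\<tau> (vadd v w) \<noteq> vadd (\<tau> v) (\<tau> w)" using na by blast
  have g: "good (SQS_tau \<tau>) (\<pi> p) (\<pi> q)" by (rule good_perm[OF pb pD same_good[OF s]])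
  show False
  proof (cases "\<pi> p")
    case (Inl a)
    then obtain b where "\<pi> q = Inr b" using ne by (cases "\<pi> q") auto
    thus False using g Inl cross_bad[OF vw] by simp
  next
    case (Inr b)
    then obtain a where "\<pi> q = Inl a" using ne by (cases "\<pi> q") auto
    thus False using g Inr cross_bad[OF vw] good_sym by metis
  qed
qed

lemma half_img:
  assumes na: "\<not> (\<forall>x y. \<tau> (vadd x y) = vadd (\<tau> x) (\<tau> y))"
    and pb: "bij \<pi>" and pD: "(\<lambda>Y. \<pi> ` Y) ` SQS_tau \<tau> = SQS_tau \<tau>"
    and B: "B \<noteq> {}" "B \<subseteq> range Inl \<or> B \<subseteq> range Inr"
  shows "\<pi> ` B \<subseteq> range Inl \<or> \<pi> ` B \<subseteq> range Inr"
proof -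
  obtain p where p: "p \<in> B" using B(1) by blast
  have "\<forall>q\<in>B. sd q = sd p" using B(2) p sd_iff1 by blast
  hence all: "\<forall>q\<in>B. sd (\<pi> q) = sd (\<pi> p)" using side_pres[OF na pb pD] by blast
  show ?thesis
  proof (cases "sd (\<pi> p)")
    case True
    hence "\<pi> ` B \<subseteq> range Inl" using all sd_iff1 by blast
    thus ?thesis ..
  next
    case False
    hence "\<pi> ` B \<subseteq> range Inr" using all sd_iff2 by blast
    thus ?thesis ..
  qed
qed

end

lemma shrink:
  fixes W :: "('a::finite) set"
  assumes "card B = 4" "T \<subseteq> W \<inter> B" "card T = 3"
  shows "card (sdiff W B) < card W"
proof -
  have "card T \<le> card (W \<inter> B)" by (rule card_mono) (use assms in auto)
  moreover have "card (sdiff W B) + 2 * card (W \<inter> B) = card W + card B" by (rule card_sdiff) auto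
  ultimately show ?thesis using assms by linarith
qed

context tctx
begin

lemma Q0_mem: "distinct [a,b,c,d] \<Longrightarrow> vadd (vadd a b) (vadd c d) = vzero \<Longrightarrow> Inl ` {a,b,c,d} \<in> SQS_tau \<tau>"
proof -
  assume "distinct [a,b,c,d]" "vadd (vadd a b) (vadd c d) = vzero"
  hence "\<exists>a' b' c' d'. Inl ` {a,b,c,d} = Inl ` {a',b',c',d'} \<and> distinct [a',b',c',d'] \<and> vadd (vadd a' b') (vadd c' d') = vzero"
    by (intro exI[of _ a] exI[of _ b] exI[of _ c] exI[of _ d] conjI refl)
  thus ?thesis unfolding SQS_tau_def by (intro UnI1 CollectI)
qed

lemma Q1_mem: "distinct [a,b,c,d] \<Longrightarrow> vadd (vadd a b) (vadd c d) = vzero \<Longrightarrow> Inr ` {a,b,c,d} \<in> SQS_tau \<tau>"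
proof -
  assume "distinct [a,b,c,d]" "vadd (vadd a b) (vadd c d) = vzero"
  hence "\<exists>a' b' c' d'. Inr ` {a,b,c,d} = Inr ` {a',b',c',d'} \<and> distinct [a',b',c',d'] \<and> vadd (vadd a' b') (vadd c' d') = vzero"
    by (intro exI[of _ a] exI[of _ b] exI[of _ c] exI[of _ d] conjI refl)
  thus ?thesis unfolding SQS_tau_def by (intro UnI1 UnI2 CollectI)
qed

lemma empty_S: "{} \<in> S_tau \<tau>" unfolding Sc' by (simp add: t0)

lemma reduce:
  assumes W: "W \<in> S_tau \<tau>"
  shows "W = {} \<or> card W = 4 \<or> (\<exists>B. B \<in> S_tau \<tau> \<and> card B = 4 \<and> (B \<subseteq> range Inl \<or> B \<subseteq> range Inr) \<and> card (sdiff W B) < card W)"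
proof -
  have WS: "even (card (lpart W))" "even (card (rpart W))" "vsum (rpart W) = \<tau> (vsum (lpart W))"
    using W unfolding Sc' by auto
  show ?thesis
  proof (cases "3 \<le> card (lpart W)")
    case True
    then obtain a b c d where q: "distinct [a,b,c,d]" "a \<in> lpart W" "b \<in> lpart W" "c \<in> lpart W"
      "vadd (vadd a b) (vadd c d) = vzero" by (rule quad)
    let ?B = "Inl ` {a,b,c,d} :: ('r vec + 'r vec) set"
    have BD: "?B \<in> SQS_tau \<tau>" by (rule Q0_mem[OF q(1) q(5)])
    hence B: "?B \<in> S_tau \<tau>" "card ?B = 4" using D_char by simp_all
    have "Inl ` {a,b,c} \<subseteq> W \<inter> ?B" using q(2-4) by (auto simp: lpart_def)
    moreover have "card (Inl ` {a,b,c} :: ('r vec + 'r vec) set) = 3" using q(1) by (simp add: card_image)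
    ultimately have "card (sdiff W ?B) < card W" by (intro shrink[OF B(2)])
    moreover have "?B \<subseteq> range Inl" by auto
    ultimately show ?thesis using B by blast
  next
    case F1: False
    show ?thesis
    proof (cases "3 \<le> card (rpart W)")
      case True
      then obtain a b c d where q: "distinct [a,b,c,d]" "a \<in> rpart W" "b \<in> rpart W" "c \<in> rpart W"
        "vadd (vadd a b) (vadd c d) = vzero" by (rule quad)
      let ?B = "Inr ` {a,b,c,d} :: ('r vec + 'r vec) set"
      have BD: "?B \<in> SQS_tau \<tau>" by (rule Q1_mem[OF q(1) q(5)])
      hence B: "?B \<in> S_tau \<tau>" "card ?B = 4" using D_char by simp_all
      have "Inr ` {a,b,c} \<subseteq> W \<inter> ?B" using q(2-4) by (auto simp: rpart_def)
      moreover have "card (Inr ` {a,b,c} :: ('r vec + 'r vec) set) = 3" using q(1) by (simp add: card_image)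
      ultimately have "card (sdiff W ?B) < card W" by (intro shrink[OF B(2)])
      moreover have "?B \<subseteq> range Inr" by auto
      ultimately show ?thesis using B by blast
    next
      case F2: False
      have cl: "card (lpart W) = 0 \<or> card (lpart W) = 2" using F1 WS(1) by presburger
      have cr: "card (rpart W) = 0 \<or> card (rpart W) = 2" using F2 WS(2) by presburger
      show ?thesis
      proof (cases "card (lpart W) = 0")
        case L0: True
        hence L: "lpart W = {}" by simp
        show ?thesis
        proof (cases "card (rpart W) = 0")
          case True
          hence "rpart W = {}" by simp
          hence "W = {}" using L W_split[of W] by simp
          thus ?thesis ..
        next
          case False
          hence "card (rpart W) = 2" using cr by simp
          then obtain b d where R: "rpart W = {b,d}" "b \<noteq> d" by (auto simp: card_2_iff)
          have "vadd b d = vzero" using WS(3) L R t0 by (simp add: vsum2)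
          thus ?thesis using R(2) by (simp add: vadd_eq_zero)
        qed
      next
        case False
        hence "card (lpart W) = 2" using cl by simp
        then obtain a c where L: "lpart W = {a,c}" "a \<noteq> c" by (auto simp: card_2_iff)
        show ?thesis
        proof (cases "card (rpart W) = 0")
          case True
          hence "rpart W = {}" by simp
          hence "vzero = \<tau> (vadd a c)" using WS(3) L by (simp add: vsum2)
          hence "vadd a c = vzero" using tz2 by metis
          thus ?thesis using L(2) by (simp add: vadd_eq_zero)
        next
          case False
          hence "card (rpart W) = 2" using cr by simp
          hence "card W = 4" using \<open>card (lpart W) = 2\<close> card_W[of W] by simp
          thus ?thesis by simp
        qed
      qed
    qed
  qed
qed

lemma main:
  assumes pb: "bij \<pi>" and pD: "(\<lambda>Y. \<pi> ` Y) ` SQS_tau \<tau> = SQS_tau \<tau>"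
    and hyp: "\<And>B V. B \<in> S_tau \<tau> \<Longrightarrow> card B = 4 \<Longrightarrow> B \<subseteq> range Inl \<or> B \<subseteq> range Inr
       \<Longrightarrow> V \<in> S_tau \<tau> \<Longrightarrow> sdiff V (\<pi> ` B) \<in> S_tau \<tau>"
  shows "W \<in> S_tau \<tau> \<Longrightarrow> \<pi> ` W \<in> S_tau \<tau>"
proof (induction "card W" arbitrary: W rule: less_induct)
  case less
  have pi: "inj \<pi>" using pb bij_is_inj by blast
  have r: "W = {} \<or> card W = 4 \<or> (\<exists>B. B \<in> S_tau \<tau> \<and> card B = 4 \<and> (B \<subseteq> range Inl \<or> B \<subseteq> range Inr) \<and> card (sdiff W B) < card W)"
    by (rule reduce[OF less.prems])
  show ?case
  proof (cases "W = {}")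
    case True thus ?thesis using empty_S by simp
  next
    case ne: False
    show ?thesis
    proof (cases "card W = 4")
      case True
      hence "W \<in> SQS_tau \<tau>" using less.prems D_char by simp
      hence "\<pi> ` W \<in> SQS_tau \<tau>" using img_mem[OF pb pD] by simp
      thus ?thesis using D_char by simp
    next
      case False
      then obtain B where B: "B \<in> S_tau \<tau>" "card B = 4" "B \<subseteq> range Inl \<or> B \<subseteq> range Inr"
        and c: "card (sdiff W B) < card W" using r ne by blast
      have W': "sdiff W B \<in> S_tau \<tau>" by (rule half_pres[OF B(1) B(3) less.prems])
      have "\<pi> ` (sdiff W B) \<in> S_tau \<tau>" by (rule less.hyps[OF c W'])
      hence "sdiff (\<pi> ` (sdiff W B)) (\<pi> ` B) \<in> S_tau \<tau>" by (rule hyp[OF B])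
      moreover have "sdiff (\<pi> ` (sdiff W B)) (\<pi> ` B) = \<pi> ` W"
        using image_sdiff[OF pi, of "sdiff W B" B] sdiff_sdiff[of W B] by simp
      ultimately show ?thesis by simp
    qed
  qed
qed

end

lemma inj_img: "bij \<pi> \<Longrightarrow> inj (\<lambda>Y. \<pi> ` Y)"
  by (rule injI) (simp add: bij_is_inj inj_image_eq_iff)

context tctx
begin

lemma autD_S:
  assumes pb: "bij \<pi>" and pD: "(\<lambda>Y. \<pi> ` Y) ` SQS_tau \<tau> = SQS_tau \<tau>"
  shows "(\<lambda>Y. \<pi> ` Y) ` S_tau \<tau> = S_tau \<tau>"
proof -
  have imS: "\<pi> ` B \<in> S_tau \<tau>" if "B \<in> S_tau \<tau>" "card B = 4" for B
  proof -
    have "B \<in> SQS_tau \<tau>" using that D_char by simp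
    hence "\<pi> ` B \<in> SQS_tau \<tau>" using img_mem[OF pb pD] by simp
    thus ?thesis using D_char by simp
  qed
  have hyp: "sdiff V (\<pi> ` B) \<in> S_tau \<tau>"
    if B: "B \<in> S_tau \<tau>" "card B = 4" "B \<subseteq> range Inl \<or> B \<subseteq> range Inr" and V: "V \<in> S_tau \<tau>" for B V
  proof (cases "\<forall>x y. \<tau> (vadd x y) = vadd (\<tau> x) (\<tau> y)")
    case True
    show ?thesis by (rule S_sdiff[OF V imS[OF B(1,2)] True[rule_format]])
  next
    case False
    have "B \<noteq> {}" using B(2) by auto
    hence "\<pi> ` B \<subseteq> range Inl \<or> \<pi> ` B \<subseteq> range Inr" by (rule half_img[OF False pb pD _ B(3)])
    thus ?thesis by (rule half_pres[OF imS[OF B(1,2)] _ V])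
  qed
  have sub: "(\<lambda>Y. \<pi> ` Y) ` S_tau \<tau> \<subseteq> S_tau \<tau>"
  proof
    fix X assume "X \<in> (\<lambda>Y. \<pi> ` Y) ` S_tau \<tau>"
    then obtain W where W: "W \<in> S_tau \<tau>" "X = \<pi> ` W" by blast
    show "X \<in> S_tau \<tau>" unfolding W(2) by (rule main[OF pb pD hyp W(1)])
  qed
  moreover have "card ((\<lambda>Y. \<pi> ` Y) ` S_tau \<tau>) = card (S_tau \<tau>)"
    by (rule card_image) (rule inj_on_subset[OF inj_img[OF pb] subset_UNIV])
  ultimately show ?thesis by (intro card_subset_eq) auto
qed

lemma autS_D:
  assumes pb: "bij \<pi>" and pS: "(\<lambda>Y. \<pi> ` Y) ` S_tau \<tau> = S_tau \<tau>"
  shows "(\<lambda>Y. \<pi> ` Y) ` SQS_tau \<tau> = SQS_tau \<tau>"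
proof -
  have ci: "card (\<pi> ` Y) = card Y" for Y
    by (rule card_image[OF inj_on_subset[OF bij_is_inj[OF pb] subset_UNIV]])
  have m: "\<pi> ` Y \<in> S_tau \<tau> \<longleftrightarrow> Y \<in> S_tau \<tau>" for Y
    using img_mem[OF pb pS] .
  show ?thesis
  proof (rule Set.set_eqI, rule iffI)
    fix X assume "X \<in> (\<lambda>Y. \<pi> ` Y) ` SQS_tau \<tau>"
    then obtain Y where Y: "Y \<in> SQS_tau \<tau>" "X = \<pi> ` Y" by blast
    thus "X \<in> SQS_tau \<tau>" using D_char m ci by simp
  next
    fix X assume X: "X \<in> SQS_tau \<tau>"
    have "X \<in> S_tau \<tau>" using X D_char by simp
    hence "X \<in> (\<lambda>Y. \<pi> ` Y) ` S_tau \<tau>" using pS by simp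
    then obtain Y where Y: "Y \<in> S_tau \<tau>" "X = \<pi> ` Y" by blast
    have "card Y = 4" using X D_char Y(2) ci by simp
    hence "Y \<in> SQS_tau \<tau>" using Y(1) D_char by simp
    thus "X \<in> (\<lambda>Y. \<pi> ` Y) ` SQS_tau \<tau>" using Y(2) by blast
  qed
qed

end

theorem corollary2:
  fixes \<tau> :: "('r::finite) vec \<Rightarrow> 'r vec"
  assumes "bij \<tau>" and "\<tau> vzero = vzero"
  shows "PAut (S_tau \<tau>) \<cong> Aut_design (SQS_tau \<tau>)"
proof -
  interpret tctx \<tau> using assms by unfold_locales
  have bij: "\<pi> \<in> Bij UNIV \<Longrightarrow> bij \<pi>" for \<pi> :: "'r vec + 'r vec \<Rightarrow> 'r vec + 'r vec"
    by (simp add: Bij_def)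
  have "{\<pi> \<in> Bij UNIV. (\<lambda>Y. \<pi> ` Y) ` S_tau \<tau> = S_tau \<tau>} = {\<pi> \<in> Bij UNIV. (\<lambda>Y. \<pi> ` Y) ` SQS_tau \<tau> = SQS_tau \<tau>}"
  proof (rule Collect_cong)
    fix \<pi> :: "'r vec + 'r vec \<Rightarrow> 'r vec + 'r vec"
    show "(\<pi> \<in> Bij UNIV \<and> (\<lambda>Y. \<pi> ` Y) ` S_tau \<tau> = S_tau \<tau>) =
          (\<pi> \<in> Bij UNIV \<and> (\<lambda>Y. \<pi> ` Y) ` SQS_tau \<tau> = SQS_tau \<tau>)"
    proof (cases "\<pi> \<in> Bij UNIV")
      case True
      show ?thesis
      proof (rule iffI)
        assume "\<pi> \<in> Bij UNIV \<and> (\<lambda>Y. \<pi> ` Y) ` S_tau \<tau> = S_tau \<tau>"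
        thus "\<pi> \<in> Bij UNIV \<and> (\<lambda>Y. \<pi> ` Y) ` SQS_tau \<tau> = SQS_tau \<tau>"
          using autS_D[OF bij[OF True]] True by simp
      next
        assume "\<pi> \<in> Bij UNIV \<and> (\<lambda>Y. \<pi> ` Y) ` SQS_tau \<tau> = SQS_tau \<tau>"
        thus "\<pi> \<in> Bij UNIV \<and> (\<lambda>Y. \<pi> ` Y) ` S_tau \<tau> = S_tau \<tau>"
          using autD_S[OF bij[OF True]] True by simp
      qed
    next
      case False
      thus ?thesis by simp
    qed
  qed
  hence "PAut (S_tau \<tau>) = Aut_design (SQS_tau \<tau>)"
    unfolding PAut_def Aut_design_def stab_group_def by simp
  thus ?thesis by simp
qed

end
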